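(* Let $S:M\to\mathbb{R}$ be a smooth function on Minkowski spacetime, let $\mathcal{F}_0$ be a nonzero constant $2$-form with $\mathcal{F}_0^{2}=0$ (Clifford product), let $\mu$ be a real constant, and define the $2$-form field $$\boldsymbol{F}=\mathcal{F}_0\, e^{\boldsymbol{\gamma}^5 S}=\mathcal{F}_0(\cos S+\boldsymbol{\gamma}^5\sin S).$$ (i) If the $1$-form field $\boldsymbol{P}:=-\boldsymbol{\partial} S=-dS$ satisfies $\boldsymbol{P}=\mu\,\boldsymbol{F}\boldsymbol{\gamma}^0\boldsymbol{F}$, then $\boldsymbol{F}$ satisfies the free Maxwell equation $\boldsymbol{\partial}\boldsymbol{F}=0$. (ii) Conversely, if $\boldsymbol{\partial}\boldsymbol{F}=0$, then $S$ satisfies the Hamilton–Jacobi equation of a free massless particle, $\boldsymbol{\partial}S\cdot\boldsymbol{\partial}S=0$. Consequently, for fields of this form, the free photon Hamilton–Jacobi equation $\boldsymbol{\partial}S\cdot\boldsymbol{\partial}S=0$ and the free Maxwell equation $\boldsymbol{\partial}\boldsymbol{F}=0$ are equivalent.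
   Context: Minkowski spacetime is $M\simeq\mathbb{R}^4$ with global coordinates $\{x^\mu\}$ ($\mu=0,1,2,3$) in which the metric is $\boldsymbol{g}=\eta_{\mu\nu}dx^\mu\otimes dx^\nu$, $\eta=\mathrm{diag}(1,-1,-1,-1)$. Write $\boldsymbol{\gamma}^\mu=dx^\mu$. Differential forms are regarded as sections of the Clifford bundle of differential forms $\mathcal{C}\ell(M,\mathtt{g})$, whose Clifford product satisfies $\boldsymbol{\gamma}^\mu\boldsymbol{\gamma}^\nu+\boldsymbol{\gamma}^\nu\boldsymbol{\gamma}^\mu=2\eta^{\mu\nu}$; for $1$-forms $a,b$, $a\cdot b=\tfrac12(ab+ba)$ is the (Minkowski) scalar product, so $a^2=a\cdot a$. The volume element is $\boldsymbol{\gamma}^5=\boldsymbol{\gamma}^0\boldsymbol{\gamma}^1\boldsymbol{\gamma}^2\boldsymbol{\gamma}^3$, which satisfies $(\boldsymbol{\gamma}^5)^2=-1$, anticommutes with $1$-forms and commutes with $2$-forms; $e^{\boldsymbol{\gamma}^5 S}:=\cos S+\boldsymbol{\gamma}^5\sin S$. The Dirac operator is $\boldsymbol{\partial}=\boldsymbol{\gamma}^\mu\partial_\mu=d-\delta$ ($\delta$ the Hodge codifferential), acting via the Clifford product; on a function $S$, $\boldsymbol{\partial}S=dS=\partial_\mu S\,\boldsymbol{\gamma}^\mu$. *)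

theory Defs
  imports "HOL-Analysis.Analysis"
begin

text \<open>Minkowski spacetime M = R^4 with coordinates x$0..x$3 (index type 4).
  The Clifford bundle of differential forms is trivial: each fibre is the real
  Clifford algebra Cl(1,3), realised on the basis of blades gamma^A, A a subset
  of the index set {0,1,2,3}, A ordered increasingly.  A multivector is the
  function giving its coefficients.\<close>

type_synonym mv = "4 set \<Rightarrow> real"

definition eta :: "4 \<Rightarrow> real" where
  "eta i = (if i = 0 then 1 else -1)"

text \<open>gamma^A gamma^B = blade_sign A B gamma^(A symmetric-difference B)\<close>
definition blade_sign :: "4 set \<Rightarrow> 4 set \<Rightarrow> real" where
  "blade_sign A B = (-1) ^ card {(a, b). a \<in> A \<and> b \<in> B \<and> b < a} * (\<Prod>i\<in>A \<inter> B. eta i)"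

definition cmul :: "mv \<Rightarrow> mv \<Rightarrow> mv" (infixl "\<diamondop>" 70) where
  "cmul x y = (\<lambda>C. \<Sum>A\<in>UNIV. \<Sum>B\<in>UNIV.
      if (A - B) \<union> (B - A) = C then blade_sign A B * x A * y B else 0)"

definition mv_zero :: mv where "mv_zero = (\<lambda>A. 0)"
definition mv_add :: "mv \<Rightarrow> mv \<Rightarrow> mv" where "mv_add x y = (\<lambda>A. x A + y A)"
definition mv_scale :: "real \<Rightarrow> mv \<Rightarrow> mv" where "mv_scale c x = (\<lambda>A. c * x A)"
definition mv_scalar :: "real \<Rightarrow> mv" where "mv_scalar c = (\<lambda>A. if A = {} then c else 0)"

text \<open>gamma^mu = dx^mu, and gamma^5 = gamma^0 gamma^1 gamma^2 gamma^3\<close>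
definition gam :: "4 \<Rightarrow> mv" where "gam \<mu> = (\<lambda>A. if A = {\<mu>} then 1 else 0)"
definition gam5 :: mv where "gam5 = (\<lambda>A. if A = UNIV then 1 else 0)"

definition exp_g5 :: "real \<Rightarrow> mv" where
  "exp_g5 s = mv_add (mv_scalar (cos s)) (mv_scale (sin s) gam5)"

definition is_2form :: "mv \<Rightarrow> bool" where
  "is_2form x \<longleftrightarrow> (\<forall>A. card A \<noteq> 2 \<longrightarrow> x A = 0)"

definition mv_dot :: "mv \<Rightarrow> mv \<Rightarrow> mv" where
  "mv_dot a b = mv_scale (1/2) (mv_add (a \<diamondop> b) (b \<diamondop> a))"

definition pd :: "4 \<Rightarrow> (real^4 \<Rightarrow> real) \<Rightarrow> real^4 \<Rightarrow> real" where
  "pd \<mu> f x = deriv (\<lambda>t. f (x + t *\<^sub>R axis \<mu> 1)) 0"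

fun iter_pd :: "4 list \<Rightarrow> (real^4 \<Rightarrow> real) \<Rightarrow> real^4 \<Rightarrow> real" where
  "iter_pd [] f = f"
| "iter_pd (i # is) f = pd i (iter_pd is f)"

definition smooth_fun :: "(real^4 \<Rightarrow> real) \<Rightarrow> bool" where
  "smooth_fun f \<longleftrightarrow> (\<forall>is x. iter_pd is f differentiable (at x))"

definition grad :: "(real^4 \<Rightarrow> real) \<Rightarrow> real^4 \<Rightarrow> mv" where
  "grad S x = (\<lambda>A. \<Sum>\<mu>\<in>UNIV. pd \<mu> S x * gam \<mu> A)"

definition dirac :: "(real^4 \<Rightarrow> mv) \<Rightarrow> real^4 \<Rightarrow> mv" where
  "dirac F x = (\<lambda>C. \<Sum>\<mu>\<in>UNIV. (gam \<mu> \<diamondop> (\<lambda>A. pd \<mu> (\<lambda>y. F y A) x)) C)"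

end

theory Submission
  imports Defs
begin

definition sd :: "4 set \<Rightarrow> 4 set \<Rightarrow> 4 set" where "sd A B = A - B \<union> (B - A)"

lemma sd_eq_iff: "(sd A B = C) = (B = sd A C)" unfolding sd_def by blast
lemma sd_sd[simp]: "sd A (sd A B) = B" unfolding sd_def by blast
lemma sd_empty[simp]: "sd A {} = A" "sd {} A = A" "sd A A = {}" unfolding sd_def by auto

lemma cmul_alt: "(x \<diamondop> y) C = (\<Sum>A\<in>UNIV. blade_sign A (sd A C) * x A * y (sd A C))"
proof -
  have "(x \<diamondop> y) C = (\<Sum>A\<in>UNIV. \<Sum>B\<in>UNIV. if B = sd A C then blade_sign A B * x A * y B else 0)"
    unfolding cmul_def by (intro sum.cong refl) (metis sd_def sd_eq_iff)
  also have "\<dots> = (\<Sum>A\<in>UNIV. blade_sign A (sd A C) * x A * y (sd A C))"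
    by (simp add: sum.delta')
  finally show ?thesis .
qed

definition ninv :: "4 set \<Rightarrow> 4 set \<Rightarrow> nat" where
  "ninv A B = card {(a, b). a \<in> A \<and> b \<in> B \<and> b < a}"

lemma bs_ninv: "blade_sign A B = (-1) ^ ninv A B * (\<Prod>i\<in>A \<inter> B. eta i)"
  unfolding blade_sign_def ninv_def by simp

lemma ninv_un1: "X \<inter> Y = {} \<Longrightarrow> ninv (X \<union> Y) Z = ninv X Z + ninv Y Z"
proof -
  assume d: "X \<inter> Y = {}"
  have "{(a, b). a \<in> X \<union> Y \<and> b \<in> Z \<and> b < a} = {(a, b). a \<in> X \<and> b \<in> Z \<and> b < a} \<union> {(a, b). a \<in> Y \<and> b \<in> Z \<and> b < a}" by blast
  moreover have "{(a, b). a \<in> X \<and> b \<in> Z \<and> b < a} \<inter> {(a, b). a \<in> Y \<and> b \<in> Z \<and> b < a} = {}" using d by blast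
  ultimately show ?thesis unfolding ninv_def by (simp add: card_Un_disjoint)
qed

lemma ninv_un2: "X \<inter> Y = {} \<Longrightarrow> ninv Z (X \<union> Y) = ninv Z X + ninv Z Y"
proof -
  assume d: "X \<inter> Y = {}"
  have "{(a, b). a \<in> Z \<and> b \<in> X \<union> Y \<and> b < a} = {(a, b). a \<in> Z \<and> b \<in> X \<and> b < a} \<union> {(a, b). a \<in> Z \<and> b \<in> Y \<and> b < a}" by blast
  moreover have "{(a, b). a \<in> Z \<and> b \<in> X \<and> b < a} \<inter> {(a, b). a \<in> Z \<and> b \<in> Y \<and> b < a} = {}" using d by blast
  ultimately show ?thesis unfolding ninv_def by (simp add: card_Un_disjoint)
qed

lemma ninv_sd1: "ninv (sd A B) Z + 2 * ninv (A \<inter> B) Z = ninv A Z + ninv B Z"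
proof -
  have 1: "ninv (sd A B) Z = ninv (A - B) Z + ninv (B - A) Z" unfolding sd_def by (rule ninv_un1) blast
  have 2: "ninv A Z = ninv (A - B) Z + ninv (A \<inter> B) Z" using ninv_un1[of "A - B" "A \<inter> B" Z]
    by (auto simp: Un_Diff_Int Int_commute)
  have 3: "ninv B Z = ninv (B - A) Z + ninv (A \<inter> B) Z" using ninv_un1[of "B - A" "A \<inter> B" Z]
    by (metis (no_types) Int_commute Un_Diff_Int Diff_disjoint inf_left_commute inf_bot_right)
  show ?thesis using 1 2 3 by simp
qed

lemma ninv_sd2: "ninv Z (sd A B) + 2 * ninv Z (A \<inter> B) = ninv Z A + ninv Z B"
proof -
  have 1: "ninv Z (sd A B) = ninv Z (A - B) + ninv Z (B - A)" unfolding sd_def by (rule ninv_un2) blast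
  have 2: "ninv Z A = ninv Z (A - B) + ninv Z (A \<inter> B)" using ninv_un2[of "A - B" "A \<inter> B" Z]
    by (auto simp: Un_Diff_Int Int_commute)
  have 3: "ninv Z B = ninv Z (B - A) + ninv Z (A \<inter> B)" using ninv_un2[of "B - A" "A \<inter> B" Z]
    by (metis (no_types) Int_commute Un_Diff_Int Diff_disjoint inf_left_commute inf_bot_right)
  show ?thesis using 1 2 3 by simp
qed

lemma m1_even: "((-1::real) ^ (n + 2 * k)) = (-1) ^ n"
  by (simp add: power_add power_mult)

lemma bs_assoc: "blade_sign A B * blade_sign (sd A B) Z = blade_sign B Z * blade_sign A (sd B Z)"
proof -
  have s: "(-1::real) ^ (ninv A B + ninv (sd A B) Z) = (-1) ^ (ninv B Z + ninv A (sd B Z))"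
  proof -
    have "(-1::real) ^ (ninv A B + ninv (sd A B) Z) = (-1) ^ (ninv A B + ninv (sd A B) Z + 2 * ninv (A \<inter> B) Z)"
      by (simp only: m1_even)
    also have "\<dots> = (-1) ^ (ninv A B + ninv A Z + ninv B Z)" using ninv_sd1[of A B Z] by (simp add: add.assoc)
    also have "\<dots> = (-1) ^ (ninv B Z + ninv A (sd B Z) + 2 * ninv A (B \<inter> Z))" using ninv_sd2[of A B Z] by (simp add: algebra_simps)
    also have "\<dots> = (-1) ^ (ninv B Z + ninv A (sd B Z))" by (simp only: m1_even)
    finally show ?thesis .
  qed
  have e: "(\<Prod>i\<in>A \<inter> B. eta i) * (\<Prod>i\<in>sd A B \<inter> Z. eta i) = (\<Prod>i\<in>B \<inter> Z. eta i) * (\<Prod>i\<in>A \<inter> sd B Z. eta i)"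
  proof -
    have "(\<Prod>i\<in>A \<inter> B. eta i) * (\<Prod>i\<in>sd A B \<inter> Z. eta i) = (\<Prod>i\<in>(A \<inter> B) \<union> (sd A B \<inter> Z). eta i)"
      by (rule prod.union_disjoint[symmetric]) (auto simp: sd_def)
    also have "(A \<inter> B) \<union> (sd A B \<inter> Z) = (B \<inter> Z) \<union> (A \<inter> sd B Z)" by (auto simp: sd_def)
    also have "(\<Prod>i\<in>(B \<inter> Z) \<union> (A \<inter> sd B Z). eta i) = (\<Prod>i\<in>B \<inter> Z. eta i) * (\<Prod>i\<in>A \<inter> sd B Z. eta i)"
      by (rule prod.union_disjoint) (auto simp: sd_def)
    finally show ?thesis .
  qed
  have "blade_sign A B * blade_sign (sd A B) Z = (-1) ^ (ninv A B + ninv (sd A B) Z) * ((\<Prod>i\<in>A \<inter> B. eta i) * (\<Prod>i\<in>sd A B \<inter> Z. eta i))"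
    unfolding bs_ninv power_add by (simp only: mult_ac)
  also have "\<dots> = (-1) ^ (ninv B Z + ninv A (sd B Z)) * ((\<Prod>i\<in>B \<inter> Z. eta i) * (\<Prod>i\<in>A \<inter> sd B Z. eta i))"
    using s e by simp
  also have "\<dots> = blade_sign B Z * blade_sign A (sd B Z)"
    unfolding bs_ninv power_add by (simp only: mult_ac)
  finally show ?thesis .
qed

lemma sum_sd: "(\<Sum>C\<in>UNIV. f C) = (\<Sum>B\<in>UNIV. f (sd A B :: 4 set))"
  by (rule sum.reindex_bij_witness[where i="sd A" and j="sd A"]) auto

lemma sd_assoc: "sd (sd A B) D = sd B (sd A D)" "sd B (sd B (sd A D)) = sd A D"
  by (auto simp: sd_def)

lemma cmul_assoc: "(x \<diamondop> y) \<diamondop> z = x \<diamondop> (y \<diamondop> z)"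
proof
  fix D
  have "((x \<diamondop> y) \<diamondop> z) D = (\<Sum>C\<in>UNIV. \<Sum>A\<in>UNIV. blade_sign C (sd C D) * blade_sign A (sd A C) * x A * y (sd A C) * z (sd C D))"
    unfolding cmul_alt[of "x \<diamondop> y"] cmul_alt[of x y]
    by (simp add: sum_distrib_left sum_distrib_right mult_ac)
  also have "\<dots> = (\<Sum>A\<in>UNIV. \<Sum>C\<in>UNIV. blade_sign C (sd C D) * blade_sign A (sd A C) * x A * y (sd A C) * z (sd C D))"
    by (rule sum.swap)
  also have "\<dots> = (\<Sum>A\<in>UNIV. \<Sum>B\<in>UNIV. blade_sign (sd A B) (sd (sd A B) D) * blade_sign A B * x A * y B * z (sd (sd A B) D))"
  proof (rule sum.cong[OF refl])
    fix A
    show "(\<Sum>C\<in>UNIV. blade_sign C (sd C D) * blade_sign A (sd A C) * x A * y (sd A C) * z (sd C D)) = (\<Sum>B\<in>UNIV. blade_sign (sd A B) (sd (sd A B) D) * blade_sign A B * x A * y B * z (sd (sd A B) D))"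
      using sum_sd[where A=A and f="\<lambda>C. blade_sign C (sd C D) * blade_sign A (sd A C) * x A * y (sd A C) * z (sd C D)"] by simp
  qed
  also have "\<dots> = (\<Sum>A\<in>UNIV. \<Sum>B\<in>UNIV. blade_sign A (sd A D) * blade_sign B (sd B (sd A D)) * x A * y B * z (sd B (sd A D)))"
  proof (intro sum.cong refl)
    fix A B
    have "blade_sign A B * blade_sign (sd A B) (sd B (sd A D)) = blade_sign B (sd B (sd A D)) * blade_sign A (sd A D)"
      using bs_assoc[of A B "sd B (sd A D)"] by (simp add: sd_assoc)
    then show "blade_sign (sd A B) (sd (sd A B) D) * blade_sign A B * x A * y B * z (sd (sd A B) D) = blade_sign A (sd A D) * blade_sign B (sd B (sd A D)) * x A * y B * z (sd B (sd A D))"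
      by (simp add: sd_assoc mult_ac)
  qed
  also have "\<dots> = (x \<diamondop> (y \<diamondop> z)) D"
    unfolding cmul_alt[of x] cmul_alt[of y z]
    by (simp add: sum_distrib_left sum_distrib_right mult_ac)
  finally show "((x \<diamondop> y) \<diamondop> z) D = (x \<diamondop> (y \<diamondop> z)) D" .
qed

lemma cmul_add1: "mv_add x y \<diamondop> z = mv_add (x \<diamondop> z) (y \<diamondop> z)"
  by (rule ext) (simp add: cmul_alt mv_add_def algebra_simps sum.distrib)
lemma cmul_add2: "z \<diamondop> mv_add x y = mv_add (z \<diamondop> x) (z \<diamondop> y)"
  by (rule ext) (simp add: cmul_alt mv_add_def algebra_simps sum.distrib)
lemma cmul_scale1: "mv_scale c x \<diamondop> z = mv_scale c (x \<diamondop> z)"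
  by (rule ext) (simp add: cmul_alt mv_scale_def sum_distrib_left mult_ac)
lemma cmul_scale2: "z \<diamondop> mv_scale c x = mv_scale c (z \<diamondop> x)"
  by (rule ext) (simp add: cmul_alt mv_scale_def sum_distrib_left mult_ac)
lemma cmul_zero1[simp]: "mv_zero \<diamondop> z = mv_zero"
  by (rule ext) (simp add: cmul_alt mv_zero_def)
lemma cmul_zero2[simp]: "z \<diamondop> mv_zero = mv_zero"
  by (rule ext) (simp add: cmul_alt mv_zero_def)
lemma bs_empty[simp]: "blade_sign {} A = 1" "blade_sign A {} = 1"
  by (simp_all add: blade_sign_def)
lemma cmul_scalar1: "mv_scalar c \<diamondop> z = mv_scale c z"
  by (rule ext) (simp add: cmul_alt mv_scalar_def mv_scale_def if_distrib if_distribR cong: if_cong)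
lemma cmul_scalar2: "z \<diamondop> mv_scalar c = mv_scale c z"
proof (rule ext)
  fix C
  have "(z \<diamondop> mv_scalar c) C = (\<Sum>A\<in>UNIV. if A = C then blade_sign A (sd A C) * z A * c else 0)"
    unfolding cmul_alt mv_scalar_def by (intro sum.cong refl) (auto simp: sd_def)
  then show "(z \<diamondop> mv_scalar c) C = mv_scale c z C" by (simp add: mv_scale_def)
qed

lemma card_minus1: "card (UNIV - {x::4}) = 3"
  by (simp add: card_Diff_singleton)

lemma ninv_univ: "ninv UNIV B + ninv B UNIV = 3 * card B"
proof -
  let ?P1 = "{(x, y). x \<in> B \<and> (x::4) < y}"
  let ?P2 = "{(x, y). x \<in> B \<and> (y::4) < x}"
  have "ninv UNIV B = card (prod.swap ` {(a, b). a \<in> (UNIV::4 set) \<and> b \<in> B \<and> b < a})"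
    unfolding ninv_def by (simp add: card_image)
  also have "prod.swap ` {(a, b). a \<in> (UNIV::4 set) \<and> b \<in> B \<and> b < a} = ?P1" by auto
  finally have 1: "ninv UNIV B = card ?P1" .
  have 2: "ninv B UNIV = card ?P2" unfolding ninv_def by simp
  have "card ?P1 + card ?P2 = card (?P1 \<union> ?P2)"
    by (rule card_Un_disjoint[symmetric]) auto
  also have "?P1 \<union> ?P2 = Sigma B (\<lambda>x. UNIV - {x})" by (auto simp: neq_iff)
  also have "card (Sigma B (\<lambda>x. UNIV - {x})) = (\<Sum>x\<in>B. card (UNIV - {x::4}))"
    by (rule card_SigmaI) auto
  also have "\<dots> = 3 * card B" by (simp add: card_minus1)
  finally show ?thesis using 1 2 by simp
qed

lemma bs_univ_swap: "blade_sign UNIV B = (-1) ^ card B * blade_sign B UNIV"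
proof -
  have p: "(-1::real) ^ ninv UNIV B * (-1) ^ ninv B UNIV = (-1) ^ card B"
    by (simp add: power_add[symmetric] ninv_univ power_mult)
  have q: "(-1::real) ^ ninv UNIV B = (-1) ^ card B * (-1) ^ ninv B UNIV"
  proof -
    have "(-1::real) ^ ninv UNIV B = (-1) ^ ninv UNIV B * ((-1) ^ ninv B UNIV * (-1) ^ ninv B UNIV)"
      by (simp add: power_add[symmetric] mult_2[symmetric] power_mult)
    also have "\<dots> = ((-1) ^ ninv UNIV B * (-1) ^ ninv B UNIV) * (-1) ^ ninv B UNIV" by (simp only: mult_ac)
    also have "\<dots> = (-1) ^ card B * (-1) ^ ninv B UNIV" by (simp only: p)
    finally show ?thesis .
  qed
  show ?thesis unfolding bs_ninv q by (simp add: Int_commute mult_ac)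
qed

lemma gam5_left: "(gam5 \<diamondop> x) C = blade_sign UNIV (sd UNIV C) * x (sd UNIV C)"
  unfolding cmul_alt gam5_def by (simp add: if_distrib if_distribR cong: if_cong)

lemma gam5_right: "(x \<diamondop> gam5) C = blade_sign (sd UNIV C) UNIV * x (sd UNIV C)"
proof -
  have "(x \<diamondop> gam5) C = (\<Sum>A\<in>UNIV. if A = sd UNIV C then blade_sign A (sd A C) * x A else 0)"
    unfolding cmul_alt gam5_def by (intro sum.cong refl) (auto simp: sd_def)
  also have "\<dots> = blade_sign (sd UNIV C) (sd (sd UNIV C) C) * x (sd UNIV C)" by simp
  also have "sd (sd UNIV C) C = UNIV" by (auto simp: sd_def)
  finally show ?thesis .
qed

lemma gam5_comm: "is_2form x \<Longrightarrow> gam5 \<diamondop> x = x \<diamondop> gam5"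
proof (rule ext)
  fix C assume x: "is_2form x"
  show "(gam5 \<diamondop> x) C = (x \<diamondop> gam5) C"
  proof (cases "card (sd UNIV C) = 2")
    case True then show ?thesis unfolding gam5_left gam5_right bs_univ_swap by simp
  next
    case False then show ?thesis using x unfolding gam5_left gam5_right is_2form_def by simp
  qed
qed

lemma gam5_anti: "gam5 \<diamondop> gam 0 = mv_scale (-1) (gam 0 \<diamondop> gam5)"
proof (rule ext)
  fix C
  show "(gam5 \<diamondop> gam 0) C = mv_scale (-1) (gam 0 \<diamondop> gam5) C"
  proof (cases "sd UNIV C = {0}")
    case True then show ?thesis unfolding gam5_left gam5_right bs_univ_swap mv_scale_def by simp
  next
    case False then show ?thesis unfolding gam5_left gam5_right mv_scale_def gam_def by simp
  qed
qed

lemma prod_eta: "(\<Prod>i\<in>UNIV. eta i) = -1"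
proof -
  have "(\<Prod>i\<in>UNIV. eta i) = eta 0 * (\<Prod>i\<in>UNIV - {0}. eta i)"
    by (rule prod.remove) auto
  also have "(\<Prod>i\<in>UNIV - {0}. eta i) = (\<Prod>i\<in>UNIV - {0::4}. -1)"
    by (rule prod.cong) (auto simp: eta_def)
  finally show ?thesis by (simp add: card_minus1 eta_def)
qed

lemma gam5_sq: "gam5 \<diamondop> gam5 = mv_scalar (-1)"
proof (rule ext)
  fix C
  have n: "ninv UNIV UNIV = 6" using ninv_univ[of UNIV] by simp
  have b: "blade_sign UNIV UNIV = -1" unfolding bs_ninv n by (simp add: prod_eta)
  have "sd UNIV C = UNIV \<longleftrightarrow> C = {}" by (auto simp: sd_def)
  then show "(gam5 \<diamondop> gam5) C = mv_scalar (-1) C"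
    unfolding gam5_left by (auto simp: gam5_def mv_scalar_def b)
qed

lemmas lin = cmul_add1 cmul_add2 cmul_scale1 cmul_scale2 cmul_scalar1 cmul_scalar2

lemma exp_g5_mul: "exp_g5 s \<diamondop> exp_g5 t = exp_g5 (s + t)"
  unfolding exp_g5_def lin gam5_sq
  by (rule ext) (simp add: mv_add_def mv_scale_def mv_scalar_def cos_add sin_add algebra_simps)

lemma exp_g5_0: "exp_g5 0 = mv_scalar 1"
  by (rule ext) (simp add: exp_g5_def mv_add_def mv_scale_def mv_scalar_def)

lemma exp_gam0: "exp_g5 s \<diamondop> gam 0 = gam 0 \<diamondop> exp_g5 (- s)"
  unfolding exp_g5_def lin gam5_anti
  by (rule ext) (simp add: mv_add_def mv_scale_def mv_scalar_def)

lemma exp_comm: "is_2form x \<Longrightarrow> exp_g5 s \<diamondop> x = x \<diamondop> exp_g5 s"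
  unfolding exp_g5_def lin by (simp add: gam5_comm)

lemma bs_single: "blade_sign {\<mu>} {\<nu>} = (if \<mu> = \<nu> then eta \<mu> else if \<nu> < \<mu> then -1 else 1)"
proof -
  have "{(a, b). a \<in> {\<mu>} \<and> b \<in> {\<nu>} \<and> b < a} = (if \<nu> < \<mu> then {(\<mu>, \<nu>)} else {})" by auto
  then show ?thesis unfolding blade_sign_def by auto
qed

lemma gam_gam: "(gam \<mu> \<diamondop> gam \<nu>) C = (if C = sd {\<mu>} {\<nu>} then blade_sign {\<mu>} {\<nu>} else 0)"
proof -
  have "(gam \<mu> \<diamondop> gam \<nu>) C = (\<Sum>A\<in>UNIV. if A = {\<mu>} then blade_sign A (sd A C) * gam \<nu> (sd A C) else 0)"
    unfolding cmul_alt by (intro sum.cong refl) (simp add: gam_def)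
  also have "\<dots> = blade_sign {\<mu>} (sd {\<mu>} C) * gam \<nu> (sd {\<mu>} C)" by simp
  also have "\<dots> = (if C = sd {\<mu>} {\<nu>} then blade_sign {\<mu>} {\<nu>} else 0)"
    unfolding gam_def using sd_eq_iff[of "{\<mu>}" C "{\<nu>}"] by auto
  finally show ?thesis .
qed

lemma sd_single_empty: "({} = sd {\<mu>} {\<nu>}) = (\<mu> = \<nu>)"
  by (auto simp: sd_def)

lemma sd_comm: "sd A B = sd B A"
  by (auto simp: sd_def)

lemma bs_single_anti: "\<mu> \<noteq> \<nu> \<Longrightarrow> blade_sign {\<nu>} {\<mu>} = - blade_sign {\<mu>} {\<nu>}"
  unfolding bs_single by (auto simp: neq_iff)

lemma grad_sq: "grad S x \<diamondop> grad S x = mv_scalar (\<Sum>\<mu>\<in>UNIV. eta \<mu> * (pd \<mu> S x)^2)"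
proof (rule ext)
  fix C
  let ?p = "\<lambda>\<mu>. pd \<mu> S x"
  let ?f = "\<lambda>\<mu> \<nu>. ?p \<mu> * ?p \<nu> * (if C = sd {\<mu>} {\<nu>} then blade_sign {\<mu>} {\<nu>} else 0)"
  have e: "(grad S x \<diamondop> grad S x) C = (\<Sum>\<mu>\<in>UNIV. \<Sum>\<nu>\<in>UNIV. ?f \<mu> \<nu>)"
  proof -
    have "(grad S x \<diamondop> grad S x) C = (\<Sum>A\<in>UNIV. \<Sum>\<mu>\<in>UNIV. \<Sum>\<nu>\<in>UNIV. ?p \<mu> * ?p \<nu> * (blade_sign A (sd A C) * gam \<mu> A * gam \<nu> (sd A C)))"
      unfolding cmul_alt grad_def by (simp add: sum_distrib_left sum_distrib_right mult_ac)
    also have "\<dots> = (\<Sum>\<mu>\<in>UNIV. \<Sum>\<nu>\<in>UNIV. \<Sum>A\<in>UNIV. ?p \<mu> * ?p \<nu> * (blade_sign A (sd A C) * gam \<mu> A * gam \<nu> (sd A C)))"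
      by (subst sum.swap, rule sum.cong[OF refl], rule sum.swap)
    also have "\<dots> = (\<Sum>\<mu>\<in>UNIV. \<Sum>\<nu>\<in>UNIV. ?p \<mu> * ?p \<nu> * (gam \<mu> \<diamondop> gam \<nu>) C)"
      unfolding cmul_alt by (simp add: sum_distrib_left mult_ac)
    finally show ?thesis unfolding gam_gam .
  qed
  show "(grad S x \<diamondop> grad S x) C = mv_scalar (\<Sum>\<mu>\<in>UNIV. eta \<mu> * (pd \<mu> S x)^2) C"
  proof (cases "C = {}")
    case True
    have "(\<Sum>\<mu>\<in>UNIV. \<Sum>\<nu>\<in>UNIV. ?f \<mu> \<nu>) = (\<Sum>\<mu>\<in>UNIV. \<Sum>\<nu>\<in>UNIV. if \<nu> = \<mu> then ?p \<mu> * ?p \<nu> * eta \<mu> else 0)"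
      using True by (intro sum.cong refl) (simp add: sd_single_empty bs_single)
    also have "\<dots> = (\<Sum>\<mu>\<in>UNIV. eta \<mu> * (pd \<mu> S x)^2)" by (simp add: power2_eq_square mult_ac)
    finally show ?thesis using e True by (simp add: mv_scalar_def)
  next
    case False
    have anti: "?f \<nu> \<mu> = - ?f \<mu> \<nu>" for \<mu> \<nu>
    proof (cases "\<mu> = \<nu>")
      case True then show ?thesis using False by simp
    next
      case ne: False
      have "sd {\<nu>} {\<mu>} = sd {\<mu>} {\<nu>}" by (rule sd_comm)
      moreover have "blade_sign {\<nu>} {\<mu>} = - blade_sign {\<mu>} {\<nu>}" by (rule bs_single_anti[OF ne])
      ultimately show ?thesis by simp
    qed
    have "(\<Sum>\<mu>\<in>UNIV. \<Sum>\<nu>\<in>UNIV. ?f \<mu> \<nu>) = (\<Sum>\<nu>\<in>UNIV. \<Sum>\<mu>\<in>UNIV. ?f \<mu> \<nu>)" by (rule sum.swap)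
    also have "\<dots> = (\<Sum>\<nu>\<in>UNIV. \<Sum>\<mu>\<in>UNIV. - ?f \<nu> \<mu>)" by (intro sum.cong refl) (rule anti)
    also have "\<dots> = - (\<Sum>\<nu>\<in>UNIV. \<Sum>\<mu>\<in>UNIV. ?f \<nu> \<mu>)" by (simp only: sum_negf)
    finally have "(\<Sum>\<mu>\<in>UNIV. \<Sum>\<nu>\<in>UNIV. ?f \<mu> \<nu>) = 0" by simp
    then show ?thesis using e False by (simp add: mv_scalar_def)
  qed
qed

lemma pd_trig:
  assumes "S differentiable (at x)"
  shows "pd \<mu> (\<lambda>y. cos (S y) * a + sin (S y) * b) x = (- sin (S x) * a + cos (S x) * b) * pd \<mu> S x"
proof -
  define h where "h t = S (x + t *\<^sub>R axis \<mu> 1)" for t :: real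
  have "(\<lambda>t::real. x + t *\<^sub>R axis \<mu> (1::real)) differentiable (at 0)" by (intro derivative_intros)
  moreover have "S differentiable (at ((\<lambda>t::real. x + t *\<^sub>R axis \<mu> (1::real)) 0))" using assms by simp
  ultimately have "(S \<circ> (\<lambda>t::real. x + t *\<^sub>R axis \<mu> (1::real))) differentiable (at 0)"
    by (rule differentiable_chain_at)
  then have "h differentiable (at 0)" by (simp add: h_def[abs_def] o_def)
  then have hd: "(h has_real_derivative deriv h 0) (at 0)"
    using DERIV_deriv_iff_real_differentiable by blast
  have h0: "h 0 = S x" by (simp add: h_def)
  have c: "((\<lambda>t. cos (h t)) has_real_derivative (- sin (h 0) * deriv h 0)) (at 0)"
    using DERIV_cos[of "h 0"] hd DERIV_chain2 by (metis mult_minus_left)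
  have s: "((\<lambda>t. sin (h t)) has_real_derivative (cos (h 0) * deriv h 0)) (at 0)"
    using DERIV_sin[of "h 0"] hd DERIV_chain2 by metis
  have "((\<lambda>t. cos (h t) * a + sin (h t) * b) has_real_derivative (- sin (h 0) * deriv h 0 * a + cos (h 0) * deriv h 0 * b)) (at 0)"
    using DERIV_add[OF DERIV_cmult_right[OF c] DERIV_cmult_right[OF s]] by simp
  then have "deriv (\<lambda>t. cos (h t) * a + sin (h t) * b) 0 = (- sin (S x) * a + cos (S x) * b) * deriv h 0"
    using h0 DERIV_imp_deriv by (metis (no_types, lifting) distrib_right mult.commute mult.left_commute)
  then show ?thesis unfolding pd_def h_def by simp
qed

lemma F_expand: "F0 \<diamondop> exp_g5 s = mv_add (mv_scale (cos s) F0) (mv_scale (sin s) (F0 \<diamondop> gam5))"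
  unfolding exp_g5_def lin ..

lemma H_expand: "F0 \<diamondop> (gam5 \<diamondop> exp_g5 s) = (\<lambda>A. - sin s * F0 A + cos s * (F0 \<diamondop> gam5) A)"
  unfolding exp_g5_def lin gam5_sq
  by (rule ext) (simp add: mv_add_def mv_scale_def)

lemma cmul_grad: "(grad S x \<diamondop> H) C = (\<Sum>\<mu>\<in>UNIV. pd \<mu> S x * (gam \<mu> \<diamondop> H) C)"
proof -
  have "(grad S x \<diamondop> H) C = (\<Sum>A\<in>UNIV. \<Sum>\<mu>\<in>UNIV. pd \<mu> S x * (blade_sign A (sd A C) * gam \<mu> A * H (sd A C)))"
    unfolding cmul_alt grad_def by (simp add: sum_distrib_left sum_distrib_right mult_ac)
  also have "\<dots> = (\<Sum>\<mu>\<in>UNIV. \<Sum>A\<in>UNIV. pd \<mu> S x * (blade_sign A (sd A C) * gam \<mu> A * H (sd A C)))"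
    by (rule sum.swap)
  finally show ?thesis unfolding cmul_alt by (simp add: sum_distrib_left)
qed

lemma dirac_F:
  assumes "S differentiable (at x)"
  shows "dirac (\<lambda>y. F0 \<diamondop> exp_g5 (S y)) x = grad S x \<diamondop> (F0 \<diamondop> (gam5 \<diamondop> exp_g5 (S x)))"
proof (rule ext)
  fix C
  have "(\<lambda>A. pd \<mu> (\<lambda>y. (F0 \<diamondop> exp_g5 (S y)) A) x) = mv_scale (pd \<mu> S x) (F0 \<diamondop> (gam5 \<diamondop> exp_g5 (S x)))" for \<mu>
  proof (rule ext)
    fix A
    have "pd \<mu> (\<lambda>y. (F0 \<diamondop> exp_g5 (S y)) A) x = pd \<mu> (\<lambda>y. cos (S y) * F0 A + sin (S y) * (F0 \<diamondop> gam5) A) x"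
      unfolding F_expand by (simp add: mv_add_def mv_scale_def)
    also have "\<dots> = (- sin (S x) * F0 A + cos (S x) * (F0 \<diamondop> gam5) A) * pd \<mu> S x"
      by (rule pd_trig[OF assms])
    finally show "pd \<mu> (\<lambda>y. (F0 \<diamondop> exp_g5 (S y)) A) x = mv_scale (pd \<mu> S x) (F0 \<diamondop> (gam5 \<diamondop> exp_g5 (S x))) A"
      unfolding H_expand mv_scale_def by simp
  qed
  then have "dirac (\<lambda>y. F0 \<diamondop> exp_g5 (S y)) x C = (\<Sum>\<mu>\<in>UNIV. (gam \<mu> \<diamondop> mv_scale (pd \<mu> S x) (F0 \<diamondop> (gam5 \<diamondop> exp_g5 (S x)))) C)"
    unfolding dirac_def by simp
  also have "\<dots> = (\<Sum>\<mu>\<in>UNIV. pd \<mu> S x * (gam \<mu> \<diamondop> (F0 \<diamondop> (gam5 \<diamondop> exp_g5 (S x)))) C)"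
    by (simp only: cmul_scale2) (simp add: mv_scale_def)
  finally show "dirac (\<lambda>y. F0 \<diamondop> exp_g5 (S y)) x C = (grad S x \<diamondop> (F0 \<diamondop> (gam5 \<diamondop> exp_g5 (S x)))) C"
    unfolding cmul_grad .
qed

lemma scale_zero: "mv_scale c mv_zero = mv_zero"
  by (rule ext) (simp add: mv_scale_def mv_zero_def)

theorem mainTheorem1:
  fixes S :: "real^4 \<Rightarrow> real" and F0 :: mv and m :: real
  assumes "smooth_fun S"
    and "is_2form F0" and "F0 \<noteq> mv_zero" and "F0 \<diamondop> F0 = mv_zero"
  defines "F \<equiv> (\<lambda>x. F0 \<diamondop> exp_g5 (S x))"
  shows "((\<forall>x. mv_scale (-1) (grad S x) = mv_scale m (F x \<diamondop> gam 0 \<diamondop> F x))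
            \<longrightarrow> (\<forall>x. dirac F x = mv_zero))
       \<and> ((\<forall>x. dirac F x = mv_zero) \<longrightarrow> (\<forall>x. mv_dot (grad S x) (grad S x) = mv_zero))"
proof -
  have diff: "S differentiable (at x)" for x
  proof -
    have "iter_pd [] S differentiable (at x)" using assms(1) unfolding smooth_fun_def by blast
    then show ?thesis by simp
  qed
  have dF: "dirac F x = grad S x \<diamondop> F0 \<diamondop> (gam5 \<diamondop> exp_g5 (S x))" for x
    unfolding F_def dirac_F[OF diff] cmul_assoc ..
  have neg: "mv_scale (-1) (mv_scale (-1) y) = y" for y by (rule ext) (simp add: mv_scale_def)
  have one: "mv_scale 1 y = y" for y by (rule ext) (simp add: mv_scale_def)
  have part1: "\<forall>x. dirac F x = mv_zero"
    if h: "\<forall>x. mv_scale (-1) (grad S x) = mv_scale m (F x \<diamondop> gam 0 \<diamondop> F x)"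
  proof
    fix x
    let ?s = "S x"
    have "F x \<diamondop> gam 0 \<diamondop> F x = F0 \<diamondop> (exp_g5 ?s \<diamondop> gam 0) \<diamondop> F0 \<diamondop> exp_g5 ?s"
      unfolding F_def by (simp only: cmul_assoc)
    also have "\<dots> = F0 \<diamondop> gam 0 \<diamondop> (exp_g5 (- ?s) \<diamondop> F0) \<diamondop> exp_g5 ?s"
      unfolding exp_gam0 by (simp only: cmul_assoc)
    also have "\<dots> = F0 \<diamondop> gam 0 \<diamondop> F0 \<diamondop> (exp_g5 (- ?s) \<diamondop> exp_g5 ?s)"
      unfolding exp_comm[OF assms(2)] by (simp only: cmul_assoc)
    also have "\<dots> = F0 \<diamondop> gam 0 \<diamondop> F0"
      unfolding exp_g5_mul by (simp add: exp_g5_0 cmul_scalar2 one)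
    finally have "F x \<diamondop> gam 0 \<diamondop> F x = F0 \<diamondop> gam 0 \<diamondop> F0" .
    moreover have "mv_scale (-1) (mv_scale (-1) (grad S x)) = mv_scale (-1) (mv_scale m (F x \<diamondop> gam 0 \<diamondop> F x))"
      using h[rule_format, of x] by (rule arg_cong)
    ultimately have g: "grad S x = mv_scale (-1) (mv_scale m (F0 \<diamondop> gam 0 \<diamondop> F0))"
      unfolding neg by simp
    have "grad S x \<diamondop> F0 = mv_zero"
      unfolding g cmul_scale1 cmul_assoc assms(4) by (simp add: scale_zero)
    then show "dirac F x = mv_zero" unfolding dF by simp
  qed
  have part2: "\<forall>x. mv_dot (grad S x) (grad S x) = mv_zero"
    if h: "\<forall>x. dirac F x = mv_zero"
  proof
    fix x
    let ?s = "S x" and ?g = "grad S x"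
    have eq: "?g \<diamondop> F0 = ?g \<diamondop> F0 \<diamondop> (gam5 \<diamondop> exp_g5 ?s) \<diamondop> (exp_g5 (- ?s) \<diamondop> mv_scale (-1) gam5)"
    proof -
      have "gam5 \<diamondop> exp_g5 ?s \<diamondop> (exp_g5 (- ?s) \<diamondop> mv_scale (-1) gam5) = gam5 \<diamondop> (exp_g5 ?s \<diamondop> exp_g5 (- ?s)) \<diamondop> mv_scale (-1) gam5"
        by (simp only: cmul_assoc)
      also have "\<dots> = mv_scalar 1"
      proof -
        have e0: "exp_g5 (?s + - ?s) = mv_scalar 1" by (simp add: exp_g5_0)
        show ?thesis unfolding exp_g5_mul e0
          by (simp only: cmul_scalar2 cmul_scale2 gam5_sq one) (rule ext, simp add: mv_scale_def mv_scalar_def)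
      qed
      finally have "gam5 \<diamondop> exp_g5 ?s \<diamondop> (exp_g5 (- ?s) \<diamondop> mv_scale (-1) gam5) = mv_scalar 1" .
      then show ?thesis by (simp only: cmul_assoc cmul_scalar2 one)
    qed
    have "?g \<diamondop> F0 \<diamondop> (gam5 \<diamondop> exp_g5 ?s) = mv_zero" using h[rule_format, of x] unfolding dF .
    then have "?g \<diamondop> F0 \<diamondop> (gam5 \<diamondop> exp_g5 ?s) \<diamondop> (exp_g5 (- ?s) \<diamondop> mv_scale (-1) gam5) = mv_zero" by simp
    with eq have z: "?g \<diamondop> F0 = mv_zero" by simp
    define q where "q = (\<Sum>\<mu>\<in>UNIV. eta \<mu> * (pd \<mu> S x)^2)"
    have "mv_scale q F0 = ?g \<diamondop> (?g \<diamondop> F0)"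
      unfolding cmul_assoc[symmetric] grad_sq q_def cmul_scalar1 ..
    then have "mv_scale q F0 = mv_zero" using z by simp
    moreover obtain A where "F0 A \<noteq> 0" using assms(3) unfolding mv_zero_def by auto
    ultimately have "q = 0" unfolding mv_scale_def mv_zero_def by (metis mult_eq_0_iff)
    then show "mv_dot ?g ?g = mv_zero"
      unfolding mv_dot_def grad_sq q_def[symmetric] by (rule_tac ext) (simp add: mv_scale_def mv_add_def mv_scalar_def mv_zero_def)
  qed
  show ?thesis using part1 part2 by blast
qed

end
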